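(* Let $c_{\mathrm{rew}},c_{\mathrm{ver}}>0$ and $c_{\min}=\min\{c_{\mathrm{rew}},c_{\mathrm{ver}}\}$. For every integer $s\ge0$ such that $S_s=\{(a,b)\in\mathbb Z_{\ge0}^2:a\le b,\ 2^sc_{\min}\le c_{\mathrm{rew}}2^b+c_{\mathrm{ver}}2^{b-a}<2^{s+1}c_{\min}\}$ is nonempty, setting $b_s^\star=\max\{b:(a,b)\in S_s\}$, $j_s^\star=\max\{b-a:(a,b)\in S_s\}$, $m_s=\lceil2^{b_s^\star+1}\rceil$ and $k_s=\lceil6\cdot2^{j_s^\star}\rceil$, the quantity $\Lambda_s:=c_{\mathrm{rew}}m_s+c_{\mathrm{ver}}k_s$ satisfies $\Lambda_s\le20\cdot2^sc_{\min}$. *)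

theory Defs
  imports Complex_Main
begin

definition S_set :: "real \<Rightarrow> real \<Rightarrow> nat \<Rightarrow> (nat \<times> nat) set" where
  "S_set crew cver s = {(a, b). a \<le> b \<and>
      2 ^ s * min crew cver \<le> crew * 2 ^ b + cver * 2 ^ (b - a) \<and>
      crew * 2 ^ b + cver * 2 ^ (b - a) < 2 ^ (s + 1) * min crew cver}"

end

theory Submission
  imports Defs
begin

lemma ceil_pow2: "of_int \<lceil>(2::real) ^ n\<rceil> = (2::real) ^ n"
proof -
  have "(2::real) ^ n = of_int (2 ^ n)" by simp
  then show ?thesis by (metis ceiling_of_int)
qed

lemma ceil_6pow2: "of_int \<lceil>6 * (2::real) ^ n\<rceil> = 6 * (2::real) ^ n"
proof -
  have "6 * (2::real) ^ n = of_int (6 * 2 ^ n)" by simp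
  then show ?thesis by (metis ceiling_of_int)
qed

theorem lemma8:
  fixes crew cver :: real and s :: nat
  assumes "crew > 0" and "cver > 0"
    and "S_set crew cver s \<noteq> {}"
  shows "let cmin = min crew cver;
             bstar = Max {b. \<exists>a. (a, b) \<in> S_set crew cver s};
             jstar = Max {b - a | a b. (a, b) \<in> S_set crew cver s};
             m = \<lceil>(2::real) ^ (bstar + 1)\<rceil>;
             k = \<lceil>6 * (2::real) ^ jstar\<rceil>
         in crew * of_int m + cver * of_int k \<le> 20 * 2 ^ s * cmin"
proof -
  let ?S = "S_set crew cver s"
  let ?c = "min crew cver"
  have c0: "?c > 0" using assms by simp
  have mem: "crew * 2 ^ b < 2 ^ (s+1) * ?c \<and> cver * 2 ^ (b - a) < 2 ^ (s+1) * ?c \<and> a \<le> b"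
    if "(a,b) \<in> ?S" for a b
  proof -
    have h: "a \<le> b" "crew * 2 ^ b + cver * 2 ^ (b - a) < 2 ^ (s + 1) * ?c"
      using that unfolding S_set_def by auto
    have "crew * 2 ^ b > 0" "cver * 2 ^ (b - a) > 0" using assms by auto
    with h show ?thesis by linarith
  qed
  have bnd: "b \<le> s \<and> a \<le> s" if "(a,b) \<in> ?S" for a b
  proof -
    have "crew * 2 ^ b < 2 ^ (s+1) * crew" using mem[OF that] c0
      by (smt (verit) min.cobounded1 mult_left_mono zero_le_power)
    then have "(2::real) ^ b < 2 ^ (s+1)" using assms(1) by (simp add: mult.commute)
    then have "b < s + 1" by (subst (asm) power_strict_increasing_iff) auto
    then show ?thesis using mem[OF that] by auto
  qed
  have fin: "finite ?S"
    by (rule finite_subset[of _ "{..s} \<times> {..s}"]) (auto dest: bnd)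
  define B where "B = {b. \<exists>a. (a, b) \<in> ?S}"
  define J where "J = {b - a | a b. (a, b) \<in> ?S}"
  have B: "B = snd ` ?S" unfolding B_def by force
  have J: "J = (\<lambda>(a,b). b - a) ` ?S" unfolding J_def by force
  have "Max B \<in> B" using B fin assms(3) by (simp add: Max_in)
  then obtain a1 where a1: "(a1, Max B) \<in> ?S" unfolding B_def by auto
  have "Max J \<in> J" using J fin assms(3) by (simp add: Max_in)
  then obtain a2 b2 where a2: "(a2, b2) \<in> ?S" "Max J = b2 - a2" unfolding J_def by auto
  have e1: "crew * 2 ^ Max B < 2 ^ (s+1) * ?c" using mem[OF a1] by blast
  have e2: "cver * 2 ^ Max J < 2 ^ (s+1) * ?c" using mem[OF a2(1)] a2(2) by simp
  have "crew * 2 ^ (Max B + 1) + cver * (6 * 2 ^ Max J) \<le> 20 * 2 ^ s * ?c"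
  proof -
    have "crew * 2 ^ (Max B + 1) = 2 * (crew * 2 ^ Max B)" by simp
    moreover have "cver * (6 * 2 ^ Max J) = 6 * (cver * 2 ^ Max J)" by simp
    moreover have "(2::real) ^ (s+1) * ?c = 2 * (2 ^ s * ?c)" by simp
    moreover have "20 * 2 ^ s * ?c = 20 * (2 ^ s * ?c)" by simp
    ultimately show ?thesis using e1 e2 c0 by (smt (verit) zero_le_power mult_nonneg_nonneg)
  qed
  then show ?thesis unfolding Let_def B_def[symmetric] J_def[symmetric] ceil_pow2 ceil_6pow2 .
qed

end
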